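(* In the setting of the context, for each $A\ge1$ there exists $s_{03}(A)>1$ such that for all $s_0\ge s_{03}(A)$, writing $\psi=\psi_{s_0,d_0,d_1}$ (decomposed at time $s=s_0$): (i) there exists a rectangle $\mathcal D_{s_0}\subset[-2,2]^2$ such that the linear map $\Phi:(d_0,d_1)\mapsto(\psi_0,\psi_1)$ is one-to-one from $\mathcal D_{s_0}$ onto $\left[-\frac{A}{s_0^{2\beta+1}},\frac{A}{s_0^{2\beta+1}}\right]^2$, maps $\partial\mathcal D_{s_0}$ into $\partial\left(\left[-\frac{A}{s_0^{2\beta+1}},\frac{A}{s_0^{2\beta+1}}\right]^2\right)$, and has degree one on the boundary; (ii) for all $(d_0,d_1)\in\mathcal D_{s_0}$: $\psi_e\equiv0$, $|\psi_-(y)|<\frac1{s_0^\gamma}(1+|y|^3)$ for all $y\in\mathbb{R}$, $|\psi_0|\le\frac{A}{s_0^{2\beta+1}}$, $|\psi_1|\le\frac{A}{s_0^{2\beta+1}}$, $|\psi_2|<\frac1{s_0^{4\beta-1}}$ (in particular $\psi\in\vartheta_A(s_0)$); (iii) for all $(d_0,d_1)\in\mathcal D_{s_0}$: $\|\partial_y\psi\|_{L^\infty(\mathbb{R})}\le\frac{CA}{s_0^{2\beta+1}}\le\frac1{s_0^{\gamma-3\beta}}$ and $|\partial_y\psi_-(y)|\le\frac1{s_0^\gamma}(1+|y|^3)$ for all $y\in\mathbb{R}$, where $C>0$ depends only on $p,\mu,K$.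
   Context: Let $p>3$, $\mu>0$, $q=\frac{2p}{p+1}$, $\beta=\frac{p+1}{2(p-1)}$. Let $\rho(y)=e^{-y^2/4}/\sqrt{4\pi}$, $h_0=1,h_1=y,h_2=y^2-2$, $k_m=h_m/\int_{\mathbb{R}}h_m^2\rho$. Fix $\chi_0\in C^\infty([0,\infty),[0,1])$ nonincreasing, $\chi_0=1$ on $[0,1]$, support in $[0,2]$, a fixed constant $K\ge6$ (large, depending only on $p,\mu$), and $\chi(y,s)=\chi_0(|y|/(Ks^\beta))$. For $r\in L^\infty(\mathbb{R})$ and time $s$: $r_b=\chi(\cdot,s)r$, $r_e=(1-\chi(\cdot,s))r$, $r_m=\int r_bk_m\rho$ ($m=0,1,2$), $r_-=r_b-\sum_{m=0}^2r_mh_m$. Fix $\gamma$ with $3\beta<\gamma<\min(5\beta-1,2\beta+1)$. For $A\ge1$, $s\ge1$, $\vartheta_A(s)$ is the set of $r\in L^\infty(\mathbb{R})$ with $\|r_e\|_{L^\infty}\le A^2s^{-(\gamma-3\beta)}$, $\|r_-(y)/(1+|y|^3)\|_{L^\infty}\le As^{-\gamma}$, $|r_0|,|r_1|\le As^{-(2\beta+1)}$, $|r_2|\le\sqrt As^{-(4\beta-1)}$. For $A\ge1$, $s_0>1$, $d_0,d_1\in\mathbb{R}$: $\psi_{s_0,d_0,d_1}(y)=\frac{A}{s_0^{2\beta+1}}(d_0+d_1y)\chi(2y,s_0)$. *)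

theory Defs
  imports "HOL-Complex_Analysis.Complex_Analysis"
begin

definition beta :: "real \<Rightarrow> real" where
  "beta p = (p + 1) / (2 * (p - 1))"

definition rho :: "real \<Rightarrow> real" where
  "rho y = exp (- (y^2) / 4) / sqrt (4 * pi)"

text \<open>Only m = 0, 1, 2 are used: h0 = 1, h1 = y, h2 = y^2 - 2.\<close>
definition hpoly :: "nat \<Rightarrow> real \<Rightarrow> real" where
  "hpoly m y = (if m = 0 then 1 else if m = 1 then y else y^2 - 2)"

definition kpoly :: "nat \<Rightarrow> real \<Rightarrow> real" where
  "kpoly m y = hpoly m y / (LINT x|lborel. (hpoly m x)^2 * rho x)"

definition smooth_on_nonneg :: "(real \<Rightarrow> real) \<Rightarrow> bool" where
  "smooth_on_nonneg f \<longleftrightarrow>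
     (\<exists>g. (\<forall>n x. ((deriv ^^ n) g) differentiable (at x)) \<and> (\<forall>x\<ge>0. g x = f x))"

definition admissible_chi0 :: "(real \<Rightarrow> real) \<Rightarrow> bool" where
  "admissible_chi0 chi0 \<longleftrightarrow> smooth_on_nonneg chi0
     \<and> (\<forall>x\<ge>0. 0 \<le> chi0 x \<and> chi0 x \<le> 1)
     \<and> (\<forall>x y. 0 \<le> x \<longrightarrow> x \<le> y \<longrightarrow> chi0 y \<le> chi0 x)
     \<and> (\<forall>x. 0 \<le> x \<longrightarrow> x \<le> 1 \<longrightarrow> chi0 x = 1)
     \<and> (\<forall>x>2. chi0 x = 0)"

definition cutoff :: "(real \<Rightarrow> real) \<Rightarrow> real \<Rightarrow> real \<Rightarrow> real \<Rightarrow> real \<Rightarrow> real" where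
  "cutoff chi0 K p y s = chi0 (\<bar>y\<bar> / (K * s powr beta p))"

definition rb :: "(real \<Rightarrow> real) \<Rightarrow> real \<Rightarrow> real \<Rightarrow> (real \<Rightarrow> real) \<Rightarrow> real \<Rightarrow> real \<Rightarrow> real" where
  "rb chi0 K p r s y = cutoff chi0 K p y s * r y"

definition re :: "(real \<Rightarrow> real) \<Rightarrow> real \<Rightarrow> real \<Rightarrow> (real \<Rightarrow> real) \<Rightarrow> real \<Rightarrow> real \<Rightarrow> real" where
  "re chi0 K p r s y = (1 - cutoff chi0 K p y s) * r y"

definition rmode :: "(real \<Rightarrow> real) \<Rightarrow> real \<Rightarrow> real \<Rightarrow> (real \<Rightarrow> real) \<Rightarrow> real \<Rightarrow> nat \<Rightarrow> real" where
  "rmode chi0 K p r s m = (LINT y|lborel. rb chi0 K p r s y * kpoly m y * rho y)"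

definition rminus :: "(real \<Rightarrow> real) \<Rightarrow> real \<Rightarrow> real \<Rightarrow> (real \<Rightarrow> real) \<Rightarrow> real \<Rightarrow> real \<Rightarrow> real" where
  "rminus chi0 K p r s y = rb chi0 K p r s y - (\<Sum>m\<le>2. rmode chi0 K p r s m * hpoly m y)"

definition Linfty :: "(real \<Rightarrow> real) \<Rightarrow> bool" where
  "Linfty r \<longleftrightarrow> r \<in> borel_measurable lborel \<and> (\<exists>M. AE y in lborel. \<bar>r y\<bar> \<le> M)"

definition vartheta :: "(real \<Rightarrow> real) \<Rightarrow> real \<Rightarrow> real \<Rightarrow> real \<Rightarrow> real \<Rightarrow> real \<Rightarrow> (real \<Rightarrow> real) set" where
  "vartheta chi0 K p gam A s = {r. Linfty r
     \<and> (AE y in lborel. \<bar>re chi0 K p r s y\<bar> \<le> A^2 * s powr (- (gam - 3 * beta p)))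
     \<and> (AE y in lborel. \<bar>rminus chi0 K p r s y\<bar> / (1 + \<bar>y\<bar>^3) \<le> A * s powr (- gam))
     \<and> \<bar>rmode chi0 K p r s 0\<bar> \<le> A * s powr (- (2 * beta p + 1))
     \<and> \<bar>rmode chi0 K p r s 1\<bar> \<le> A * s powr (- (2 * beta p + 1))
     \<and> \<bar>rmode chi0 K p r s 2\<bar> \<le> sqrt A * s powr (- (4 * beta p - 1))}"

definition psi :: "(real \<Rightarrow> real) \<Rightarrow> real \<Rightarrow> real \<Rightarrow> real \<Rightarrow> real \<Rightarrow> real \<Rightarrow> real \<Rightarrow> real \<Rightarrow> real" where
  "psi chi0 K p A s0 d0 d1 y =
     A / s0 powr (2 * beta p + 1) * (d0 + d1 * y) * cutoff chi0 K p (2 * y) s0"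

text \<open>Topological degree of a map F of the plane restricted to the boundary of the
  rectangle cbox (a0,a1) (b0,b1), viewed as a map into a curve around the origin:
  the winding number about 0 of the image of the positively oriented boundary path.\<close>
definition boundary_degree :: "(real \<times> real \<Rightarrow> real \<times> real) \<Rightarrow> real \<Rightarrow> real \<Rightarrow> real \<Rightarrow> real \<Rightarrow> complex" where
  "boundary_degree F a0 a1 b0 b1 =
     winding_number ((\<lambda>z. Complex (fst (F (Re z, Im z))) (snd (F (Re z, Im z))))
                      \<circ> rectpath (Complex a0 a1) (Complex b0 b1)) 0"

end

theory Submission
  imports Defs "HOL-Probability.Probability"
begin


lemma rho_nd: "rho = normal_density 0 (sqrt 2)"
  by (rule ext) (simp add: rho_def normal_density_def)

lemma rho_pos: "rho x > 0"
  by (simp add: rho_def)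

lemma int_rho_pow: "integrable lborel (\<lambda>x. rho x * x^k)"
  using integrable_normal_moment[where \<sigma>="sqrt 2" and \<mu>=0 and k=k] by (simp add: rho_nd)

lemma int_rho0: "integral\<^sup>L lborel rho = 1"
  by (simp add: rho_nd)

lemma int_rho2: "integral\<^sup>L lborel (\<lambda>x. rho x * x^2) = 2"
  using integral_normal_moment_even[where \<sigma>="sqrt 2" and \<mu>=0 and k=1] by (simp add: rho_nd)

lemma odd_integral_zero:
  fixes f :: "real \<Rightarrow> real"
  assumes "\<And>x. f (-x) = - f x"
  shows "integral\<^sup>L lborel f = 0"
proof -
  have "integral\<^sup>L lborel f = \<bar>-1::real\<bar> *\<^sub>R (LINT x|lborel. f (0 + (-1) * x))"
    by (rule lborel_integral_real_affine) simp
  also have "\<dots> = - integral\<^sup>L lborel f" using assms by simp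
  finally show ?thesis by simp
qed

lemma eventually_small:
  fixes e X :: real assumes "e < 0"
  shows "eventually (\<lambda>s. X * s powr e < 1) at_top"
proof -
  have "((\<lambda>s. s powr e) \<longlongrightarrow> 0) at_top"
    by (rule tendsto_neg_powr[OF assms filterlim_ident])
  then have "((\<lambda>s::real. X * s powr e) \<longlongrightarrow> X * 0) at_top"
    by (intro tendsto_mult tendsto_const)
  then show ?thesis by (auto dest: order_tendstoD(2)[where a=1])
qed


lemma adm_props:
  assumes "admissible_chi0 chi0"
  shows "\<And>x. 0 \<le> x \<Longrightarrow> 0 \<le> chi0 x" "\<And>x. 0 \<le> x \<Longrightarrow> chi0 x \<le> 1"
    "\<And>x. 0 \<le> x \<Longrightarrow> x \<le> 1 \<Longrightarrow> chi0 x = 1" "\<And>x. 2 < x \<Longrightarrow> chi0 x = 0"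
  using assms unfolding admissible_chi0_def by auto

lemma chi2_deriv:
  assumes adm: "admissible_chi0 chi0"
    and gd: "\<And>x. g differentiable (at x)" and geq: "\<And>x. 0 \<le> x \<Longrightarrow> g x = chi0 x"
    and M: "\<And>x. 0 \<le> x \<Longrightarrow> x \<le> 2 \<Longrightarrow> \<bar>deriv g x\<bar> \<le> M" "0 \<le> M" and ks: "ks > 0"
  shows "\<exists>D. ((\<lambda>y. chi0 (\<bar>2*y\<bar>/ks)) has_real_derivative D) (at y) \<and> \<bar>D\<bar> \<le> 2*M/ks
            \<and> (ks < \<bar>y\<bar> \<longrightarrow> D = 0)"
proof -
  note P = adm_props[OF adm]
  have gD: "\<And>x. (g has_real_derivative deriv g x) (at x)"
    using gd DERIV_deriv_iff_real_differentiable by blast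
  have Mks: "0 \<le> 2*M/ks" using M ks by simp
  consider "y = 0" | "ks < \<bar>y\<bar>" | "0 < y" "y \<le> ks" | "y < 0" "-ks \<le> y" by linarith
  then show ?thesis
  proof cases
    case 1
    have "((\<lambda>y. chi0 (\<bar>2*y\<bar>/ks)) has_real_derivative 0) (at y)"
    proof (rule has_field_derivative_transform_within_open[where S="{-ks/2<..<ks/2}" and f="\<lambda>_. 1"])
      show "((\<lambda>_. 1::real) has_real_derivative 0) (at y)" by simp
      show "y \<in> {-ks/2<..<ks/2}" using 1 ks by simp
      fix x assume x: "x \<in> {-ks/2<..<ks/2}"
      have "\<bar>2*x\<bar>/ks \<le> 1" using x ks by (auto simp: abs_if field_simps)
      then show "1 = chi0 (\<bar>2*x\<bar>/ks)" using P(3)[of "\<bar>2*x\<bar>/ks"] ks by simp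
    qed simp
    then show ?thesis using Mks by auto
  next
    case 2
    have "((\<lambda>y. chi0 (\<bar>2*y\<bar>/ks)) has_real_derivative 0) (at y)"
    proof (rule has_field_derivative_transform_within_open[where S="- {-ks..ks}" and f="\<lambda>_. 0"])
      show "((\<lambda>_. 0::real) has_real_derivative 0) (at y)" by simp
      show "y \<in> - {-ks..ks}" using 2 by auto
      show "open (- {-ks..ks})" by auto
      fix x assume x: "x \<in> - {-ks..ks}"
      have "2 < \<bar>2*x\<bar>/ks" using x ks by (auto simp: abs_if field_simps)
      then show "0 = chi0 (\<bar>2*x\<bar>/ks)" using P(4) by simp
    qed
    then show ?thesis using Mks by auto
  next
    case 3
    have d: "((\<lambda>x. g (2*x/ks)) has_real_derivative deriv g (2*y/ks) * (2/ks)) (at y)"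
      by (rule DERIV_chain2[OF gD]) (use ks in \<open>auto intro!: derivative_eq_intros\<close>)
    have "((\<lambda>y. chi0 (\<bar>2*y\<bar>/ks)) has_real_derivative deriv g (2*y/ks) * (2/ks)) (at y)"
    proof (rule has_field_derivative_transform_within_open[OF d, where S="{0<..}"])
      fix x :: real assume "x \<in> {0<..}"
      then show "g (2*x/ks) = chi0 (\<bar>2*x\<bar>/ks)" using geq ks by simp
    qed (use 3 in auto)
    moreover have "\<bar>deriv g (2*y/ks) * (2/ks)\<bar> \<le> 2*M/ks"
    proof -
      have "\<bar>deriv g (2*y/ks)\<bar> \<le> M" using M(1) 3 ks by (simp add: field_simps)
      then show ?thesis using ks by (simp add: abs_mult field_simps)
    qed
    ultimately show ?thesis using 3 by auto
  next
    case 4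
    have d: "((\<lambda>x. g (-2*x/ks)) has_real_derivative deriv g (-2*y/ks) * (-2/ks)) (at y)"
      by (rule DERIV_chain2[OF gD]) (use ks in \<open>auto intro!: derivative_eq_intros\<close>)
    have "((\<lambda>y. chi0 (\<bar>2*y\<bar>/ks)) has_real_derivative deriv g (-2*y/ks) * (-2/ks)) (at y)"
    proof (rule has_field_derivative_transform_within_open[OF d, where S="{..<0}"])
      fix x :: real assume "x \<in> {..<0}"
      then have "0 \<le> -2*x/ks" using ks by (simp add: field_simps)
      moreover have "\<bar>2*x\<bar>/ks = -2*x/ks" using \<open>x \<in> {..<0}\<close> by simp
      ultimately show "g (-2*x/ks) = chi0 (\<bar>2*x\<bar>/ks)" using geq by simp
    qed (use 4 in auto)
    moreover have "\<bar>deriv g (-2*y/ks) * (-2/ks)\<bar> \<le> 2*M/ks"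
    proof -
      have "\<bar>deriv g (-2*y/ks)\<bar> \<le> M" using M(1) 4 ks by (simp add: field_simps)
      then show ?thesis using ks by (simp add: abs_mult field_simps)
    qed
    ultimately show ?thesis using 4 by auto
  qed
qed


lemma int_rho4: "integral\<^sup>L lborel (\<lambda>x. rho x * x^4) = 12"
  using integral_normal_moment_even[where \<sigma>="sqrt 2" and \<mu>=0 and k=2]
  by (simp add: rho_nd fact_numeral)

lemma N0: "(LINT x|lborel. (hpoly 0 x)^2 * rho x) = 1"
  using int_rho0 by (simp add: hpoly_def)

lemma N1: "(LINT x|lborel. (hpoly 1 x)^2 * rho x) = 2"
  using int_rho2 by (simp add: hpoly_def mult.commute)

lemma aux_div1: "0 < (u::real) \<Longrightarrow> u \<le> v \<Longrightarrow> 1 \<le> v / u"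
  by (simp add: field_simps)

locale setting =
  fixes chi0 g :: "real \<Rightarrow> real" and K p s :: real
  assumes adm: "admissible_chi0 chi0"
    and gd: "\<And>x. g differentiable (at x)" and geq: "\<And>x. 0 \<le> x \<Longrightarrow> g x = chi0 x"
    and ks8: "8 \<le> K * s powr beta p"
begin

abbreviation "ks \<equiv> K * s powr beta p"
abbreviation "c2 y \<equiv> chi0 (\<bar>2*y\<bar>/ks)"

lemma ks_pos: "ks > 0" using ks8 by linarith

lemma cut_eq: "cutoff chi0 K p y s = chi0 (\<bar>y\<bar>/ks)"
  by (simp add: cutoff_def)

lemma c2_ge0: "0 \<le> c2 y"
  using adm_props(1)[OF adm, of "\<bar>2*y\<bar>/ks"] ks_pos by simp
lemma c2_le1: "c2 y \<le> 1"
  using adm_props(2)[OF adm, of "\<bar>2*y\<bar>/ks"] ks_pos by simp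
lemma c2_one: "\<bar>y\<bar> \<le> ks/2 \<Longrightarrow> c2 y = 1"
  using adm_props(3)[OF adm, of "\<bar>2*y\<bar>/ks"] ks_pos by (simp add: field_simps)
lemma c2_zero: "ks < \<bar>y\<bar> \<Longrightarrow> c2 y = 0"
  using adm_props(4)[OF adm, of "\<bar>2*y\<bar>/ks"] ks_pos by (simp add: field_simps)
lemma c2_g: "c2 y = g (\<bar>2*y\<bar>/ks)"
  using geq ks_pos by simp

lemma c2_cont: "continuous_on UNIV (\<lambda>y. c2 y)"
proof -
  have gc: "continuous_on UNIV g"
    using gd by (simp add: continuous_at_imp_continuous_on differentiable_imp_continuous_within)
  have "continuous_on UNIV (\<lambda>y. g (\<bar>2*y\<bar>/ks))"
    by (rule continuous_on_compose2[OF gc]) (use ks_pos in \<open>auto intro!: continuous_intros\<close>)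
  then show ?thesis by (simp add: c2_g)
qed

lemma c2_meas[measurable]: "(\<lambda>y. c2 y) \<in> borel_measurable lborel"
  using borel_measurable_continuous_onI[OF c2_cont] by simp

lemma intT: "integrable lborel (\<lambda>y. c2 y * y^k * rho y)"
proof (rule Bochner_Integration.integrable_bound[OF int_rho_pow[of k]])
  show "(\<lambda>y. c2 y * y^k * rho y) \<in> borel_measurable lborel"
    unfolding rho_def by measurable
  show "AE x in lborel. norm (c2 x * x^k * rho x) \<le> norm (rho x * x^k)"
  proof (intro AE_I2)
    fix x :: real
    have "c2 x * \<bar>x^k\<bar> * rho x \<le> 1 * \<bar>x^k\<bar> * rho x"
      using c2_le1[of x] rho_pos[of x] by (intro mult_right_mono) auto
    then show "norm (c2 x * x^k * rho x) \<le> norm (rho x * x^k)"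
      using c2_ge0[of x] rho_pos[of x] by (simp add: abs_mult mult.commute)
  qed
qed

definition "J k = (LINT y|lborel. c2 y * y^k * rho y)"

lemma J_odd: "odd k \<Longrightarrow> J k = 0"
  unfolding J_def by (rule odd_integral_zero) (simp add: rho_def)

lemma J_upper: assumes "even k" shows "J k \<le> integral\<^sup>L lborel (\<lambda>y. rho y * y^k)"
  unfolding J_def
proof (rule integral_mono[OF intT int_rho_pow])
  fix y :: real
  have "0 \<le> y^k" using assms by (simp add: zero_le_even_power)
  then have "c2 y * (y^k * rho y) \<le> 1 * (y^k * rho y)"
    using c2_le1[of y] rho_pos[of y] by (intro mult_right_mono) auto
  then show "c2 y * y^k * rho y \<le> rho y * y^k" by (simp add: mult_ac)
qed

lemma J_ge0: assumes "even k" shows "0 \<le> J k"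
  unfolding J_def
proof (rule integral_nonneg_AE, intro AE_I2)
  fix y :: real
  have "0 \<le> y^k" using assms by (simp add: zero_le_even_power)
  then show "0 \<le> c2 y * y^k * rho y" using c2_ge0[of y] rho_pos[of y] by simp
qed

lemma J_lower: assumes "even k"
  shows "integral\<^sup>L lborel (\<lambda>y. rho y * y^k) - 4/ks^2 * integral\<^sup>L lborel (\<lambda>y. rho y * y^(k+2)) \<le> J k"
proof -
  have i2: "integrable lborel (\<lambda>y. 4/ks^2 * (rho y * y^(k+2)))"
    by (intro integrable_mult_right int_rho_pow)
  have "integral\<^sup>L lborel (\<lambda>y. rho y * y^k - 4/ks^2 * (rho y * y^(k+2))) \<le> J k"
    unfolding J_def
  proof (rule integral_mono[OF Bochner_Integration.integrable_diff[OF int_rho_pow i2] intT])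
    fix y :: real
    have yk: "0 \<le> y^k" using assms by (simp add: zero_le_even_power)
    show "rho y * y^k - 4/ks^2 * (rho y * y^(k+2)) \<le> c2 y * y^k * rho y"
    proof (cases "\<bar>y\<bar> \<le> ks/2")
      case True
      then have "c2 y = 1" by (rule c2_one)
      moreover have "0 \<le> y^(k+2)" using assms by (intro zero_le_even_power) simp
      then have "0 \<le> 4/ks^2 * (rho y * y^(k+2))"
        using rho_pos[of y] by simp
      ultimately show ?thesis by (simp add: mult_ac)
    next
      case False
      then have "ks \<le> 2*\<bar>y\<bar>" by simp
      then have "ks^2 \<le> (2*\<bar>y\<bar>)^2" using ks_pos by (intro power_mono) auto
      then have "ks^2 \<le> 4 * y^2" by (simp add: power_mult_distrib)
      moreover have "0 < ks^2" by (rule zero_less_power[OF ks_pos])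
      ultimately have "1 \<le> 4/ks^2 * y^2"
        using aux_div1[of "ks^2" "4*y^2"] by simp
      then have "rho y * y^k * 1 \<le> rho y * y^k * (4/ks^2 * y^2)"
        using yk rho_pos[of y] by (intro mult_left_mono) auto
      then have "rho y * y^k - 4/ks^2 * (rho y * y^(k+2)) \<le> 0"
        by (simp add: power_add power2_eq_square mult_ac)
      also have "0 \<le> c2 y * y^k * rho y" using yk c2_ge0[of y] rho_pos[of y] by simp
      finally show ?thesis .
    qed
  qed
  moreover have "integral\<^sup>L lborel (\<lambda>y. rho y * y^k - 4/ks^2 * (rho y * y^(k+2)))
     = integral\<^sup>L lborel (\<lambda>y. rho y * y^k) - 4/ks^2 * integral\<^sup>L lborel (\<lambda>y. rho y * y^(k+2))"
    using Bochner_Integration.integral_diff[OF int_rho_pow i2] by simp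
  ultimately show ?thesis by simp
qed

lemma J0_bounds: "1/2 \<le> J 0" "J 0 \<le> 1"
proof -
  have "(8::real)^2 \<le> ks^2" using ks8 by (intro power_mono) auto
  then have "ks^2 \<ge> 64" by simp
  then have "4/ks^2 * 2 \<le> 1/2" using ks_pos by (simp add: field_simps)
  moreover have "1 - 4/ks^2 * 2 \<le> J 0"
    using J_lower[of 0] unfolding add_0 power_0 mult_1_right int_rho2 by (simp add: int_rho0)
  ultimately show "1/2 \<le> J 0" by simp
  show "J 0 \<le> 1" using J_upper[of 0] int_rho0 by simp
qed

lemma J2_bounds: "1 \<le> J 2" "J 2 \<le> 2"
proof -
  have "(8::real)^2 \<le> ks^2" using ks8 by (intro power_mono) auto
  then have "ks^2 \<ge> 64" by simp
  then have "4/ks^2 * 12 \<le> 1" using ks_pos by (simp add: field_simps)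
  moreover have "2 - 4/ks^2 * 12 \<le> J 2"
    using J_lower[of 2] unfolding numeral_plus_numeral semiring_norm int_rho2 int_rho4 by simp
  ultimately show "1 \<le> J 2" by simp
  show "J 2 \<le> 2" using J_upper[of 2] int_rho2 by simp
qed

end


definition "N2 = (LINT x|lborel. (hpoly 2 x)^2 * rho x)"

context setting begin

lemma lin4: "(LINT y|lborel. u * (c2 y * y^i * rho y) + v * (c2 y * y^j * rho y)
              + (w * (c2 y * y^k * rho y) + z * (c2 y * y^l * rho y)))
   = u * J i + v * J j + (w * J k + z * J l)"
  by (simp add: J_def integrable_mult_right intT Bochner_Integration.integral_add)

lemma lin2: "(LINT y|lborel. u * (c2 y * y^i * rho y) + v * (c2 y * y^j * rho y))
   = u * J i + v * J j"
  by (simp add: J_def integrable_mult_right intT Bochner_Integration.integral_add)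

lemma psi_eq: "psi chi0 K p A s d0 d1 y = A / s powr (2 * beta p + 1) * (d0 + d1*y) * c2 y"
  by (simp add: psi_def cut_eq)

lemma c2_cut: "cutoff chi0 K p y s * c2 y = c2 y"
proof (cases "ks < \<bar>y\<bar>")
  case True then show ?thesis using c2_zero by simp
next
  case False
  then have "\<bar>y\<bar>/ks \<le> 1" using ks_pos by (simp add: field_simps)
  then show ?thesis using adm_props(3)[OF adm, of "\<bar>y\<bar>/ks"] ks_pos by (simp add: cut_eq)
qed

lemma rb_psi: "rb chi0 K p (psi chi0 K p A s d0 d1) s y = psi chi0 K p A s d0 d1 y"
proof -
  have "rb chi0 K p (psi chi0 K p A s d0 d1) s y
     = A / s powr (2 * beta p + 1) * (d0 + d1*y) * (cutoff chi0 K p y s * c2 y)"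
    unfolding rb_def psi_eq by (simp only: mult_ac)
  also have "\<dots> = psi chi0 K p A s d0 d1 y" by (simp only: c2_cut psi_eq)
  finally show ?thesis .
qed

lemma re_psi: "re chi0 K p (psi chi0 K p A s d0 d1) s y = 0"
proof -
  have "re chi0 K p (psi chi0 K p A s d0 d1) s y
     = A / s powr (2 * beta p + 1) * (d0 + d1*y) * (c2 y - cutoff chi0 K p y s * c2 y)"
    unfolding re_def psi_eq by (simp only: algebra_simps)
  also have "\<dots> = 0" by (simp only: c2_cut) simp
  finally show ?thesis .
qed

lemma J1: "J 1 = 0" by (rule J_odd) simp
lemma J3: "J 3 = 0" by (rule J_odd) simp

lemma kpoly0: "kpoly 0 y = 1"
  unfolding kpoly_def N0 by (simp add: hpoly_def)
lemma kpoly1: "kpoly 1 y = y/2"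
  unfolding kpoly_def N1 by (simp add: hpoly_def)

lemma rmode_eq: "rmode chi0 K p (psi chi0 K p A s d0 d1) s m
   = (LINT y|lborel. (A / s powr (2 * beta p + 1) * (d0 + d1*y) * c2 y) * kpoly m y * rho y)"
  by (simp add: rmode_def rb_psi psi_eq)

lemma mode0: "rmode chi0 K p (psi chi0 K p A s d0 d1) s 0 = A / s powr (2 * beta p + 1) * d0 * J 0"
proof -
  let ?a = "A / s powr (2 * beta p + 1)"
  have E: "(\<lambda>y. (?a * (d0 + d1*y) * c2 y) * kpoly 0 y * rho y)
      = (\<lambda>y. (?a*d0) * (c2 y * y^0 * rho y) + (?a*d1) * (c2 y * y^1 * rho y))"
    by (rule ext) (simp only: kpoly0, simp add: algebra_simps add_divide_distrib)
  then show ?thesis by (simp only: rmode_eq E lin2 J1, simp?)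
qed

lemma mode1: "rmode chi0 K p (psi chi0 K p A s d0 d1) s 1 = A / s powr (2 * beta p + 1) * d1 * (J 2 / 2)"
proof -
  let ?a = "A / s powr (2 * beta p + 1)"
  have E: "(\<lambda>y. (?a * (d0 + d1*y) * c2 y) * kpoly 1 y * rho y)
      = (\<lambda>y. (?a*d0/2) * (c2 y * y^1 * rho y) + (?a*d1/2) * (c2 y * y^2 * rho y))"
    by (rule ext) (simp only: kpoly1, simp add: algebra_simps add_divide_distrib power2_eq_square)
  then show ?thesis by (simp only: rmode_eq E lin2 J1, simp?)
qed

lemma mode2: "rmode chi0 K p (psi chi0 K p A s d0 d1) s 2
   = A / s powr (2 * beta p + 1) * d0 * ((J 2 - 2 * J 0) / N2)"
proof -
  let ?a = "A / s powr (2 * beta p + 1)"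
  have E: "(\<lambda>y. (?a * (d0 + d1*y) * c2 y) * kpoly 2 y * rho y)
      = (\<lambda>y. (?a*d0/N2) * (c2 y * y^2 * rho y) + (-2*?a*d0/N2) * (c2 y * y^0 * rho y)
           + ((?a*d1/N2) * (c2 y * y^3 * rho y) + (-2*?a*d1/N2) * (c2 y * y^1 * rho y)))"
    by (rule ext) (simp add: kpoly_def N2_def hpoly_def algebra_simps power2_eq_square power3_eq_cube divide_simps)
  then have "rmode chi0 K p (psi chi0 K p A s d0 d1) s 2
     = ?a*d0/N2 * J 2 + -2*?a*d0/N2 * J 0 + (?a*d1/N2 * J 3 + -2*?a*d1/N2 * J 1)"
    by (simp only: rmode_eq E lin4)
  then show ?thesis by (simp only: J1 J3, simp add: algebra_simps diff_divide_distrib)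
qed

end


lemma cube_bounds: fixes y :: real shows "\<bar>y\<bar> \<le> 1 + \<bar>y\<bar>^3" "y^2 \<le> 1 + \<bar>y\<bar>^3" "1 \<le> 1 + \<bar>y\<bar>^3"
proof -
  have t: "\<bar>y\<bar> \<le> 1 + \<bar>y\<bar>^3 \<and> \<bar>y\<bar>^2 \<le> 1 + \<bar>y\<bar>^3"
  proof (cases "\<bar>y\<bar> \<le> 1")
    case True
    then have "\<bar>y\<bar>^2 \<le> 1" by (intro power_le_one) auto
    then show ?thesis using True by (simp add: add_increasing2)
  next
    case False
    then have "\<bar>y\<bar>^2 \<le> \<bar>y\<bar>^3" by (intro power_increasing) auto
    moreover have "\<bar>y\<bar> * 1 \<le> \<bar>y\<bar> * \<bar>y\<bar>" using False by (intro mult_left_mono) auto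
    then have "\<bar>y\<bar> \<le> \<bar>y\<bar>^2" by (simp only: power2_eq_square mult_1_right)
    ultimately show ?thesis by simp
  qed
  then show "\<bar>y\<bar> \<le> 1 + \<bar>y\<bar>^3" by simp
  show "y^2 \<le> 1 + \<bar>y\<bar>^3" using t by simp
  show "1 \<le> 1 + \<bar>y\<bar>^3" by simp
qed

lemma aux_ks: "0 < (k::real) \<Longrightarrow> (2+2*k)*(2*M/k) = 4*M/k + 4*M"
  by (simp add: field_simps)
lemma aux_ks2: "8 \<le> (k::real) \<Longrightarrow> 0 \<le> M \<Longrightarrow> 4*M/k \<le> M"
  by (simp add: field_simps) (rule mult_left_mono, auto)

context setting begin

lemma psi_deriv:
  assumes M: "\<And>x. 0 \<le> x \<Longrightarrow> x \<le> 2 \<Longrightarrow> \<bar>deriv g x\<bar> \<le> M" "0 \<le> M"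
    and A: "0 \<le> A" and d: "\<bar>d0\<bar> \<le> 2" "\<bar>d1\<bar> \<le> 2"
  shows "\<exists>D. (psi chi0 K p A s d0 d1 has_real_derivative D) (at y)
            \<and> \<bar>D\<bar> \<le> (2 + 5*M) * (A / s powr (2 * beta p + 1))"
proof -
  let ?a = "A / s powr (2 * beta p + 1)"
  have a0: "0 \<le> ?a" using A by simp
  obtain Dc where Dc: "((\<lambda>y. c2 y) has_real_derivative Dc) (at y)" "\<bar>Dc\<bar> \<le> 2*M/ks"
      "ks < \<bar>y\<bar> \<longrightarrow> Dc = 0"
    using chi2_deriv[OF adm gd geq M ks_pos] by blast
  have feq: "psi chi0 K p A s d0 d1 = (\<lambda>y. ?a * (d0 + d1*y) * c2 y)"
    by (rule ext) (simp add: psi_eq)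
  have "((\<lambda>y. ?a * (d0 + d1*y) * c2 y) has_real_derivative
          ?a * d1 * c2 y + ?a * (d0 + d1*y) * Dc) (at y)"
  proof -
    have l0: "\<And>c. ((\<lambda>y. c * (d0 + d1*y)) has_real_derivative c * d1) (at y)"
      by (auto intro!: derivative_eq_intros)
    have l: "((\<lambda>y. ?a * (d0 + d1*y)) has_real_derivative ?a * d1) (at y)" by (rule l0)
    show ?thesis using DERIV_mult[OF l Dc(1)] by (simp add: mult_ac)
  qed
  moreover have "\<bar>?a * d1 * c2 y + ?a * (d0 + d1*y) * Dc\<bar> \<le> (2 + 5*M) * ?a"
  proof -
    have t1: "\<bar>?a * d1 * c2 y\<bar> \<le> 2 * ?a"
    proof -
      have "\<bar>d1 * c2 y\<bar> = \<bar>d1\<bar> * c2 y" using c2_ge0[of y] by (simp add: abs_mult)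
      also have "\<dots> \<le> 2 * 1" using d c2_ge0[of y] c2_le1[of y] by (intro mult_mono) auto
      finally have "\<bar>d1 * c2 y\<bar> \<le> 2" by simp
      moreover have "\<bar>?a * d1 * c2 y\<bar> = ?a * \<bar>d1 * c2 y\<bar>"
        by (simp only: mult.assoc abs_mult abs_of_nonneg[OF a0])
      ultimately show ?thesis using a0 by (metis mult.commute mult_left_mono)
    qed
    have t2: "\<bar>(d0 + d1*y) * Dc\<bar> \<le> 5*M"
    proof (cases "ks < \<bar>y\<bar>")
      case True then show ?thesis using Dc(3) M(2) by simp
    next
      case False
      have "\<bar>d0 + d1*y\<bar> \<le> 2 + 2*ks"
      proof -
        have "\<bar>d1*y\<bar> \<le> 2*ks" using d False by (simp add: abs_mult mult_mono)
        then show ?thesis using d by linarith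
      qed
      then have "\<bar>(d0 + d1*y) * Dc\<bar> \<le> (2 + 2*ks) * (2*M/ks)"
        unfolding abs_mult using Dc(2) by (intro mult_mono) auto
      also have "\<dots> = 4*M/ks + 4*M" using ks_pos by (rule aux_ks)
      also have "\<dots> \<le> 5*M"
      proof -
        have "4*M/ks \<le> M" using ks8 M(2) by (rule aux_ks2)
        then show ?thesis by simp
      qed
      finally show ?thesis .
    qed
    have "\<bar>?a * (d0 + d1*y) * Dc\<bar> = ?a * \<bar>(d0 + d1*y) * Dc\<bar>"
      by (simp only: mult.assoc abs_mult abs_of_nonneg[OF a0])
    also have "\<dots> \<le> ?a * (5*M)" using t2 a0 by (rule mult_left_mono)
    finally have "\<bar>?a * (d0 + d1*y) * Dc\<bar> \<le> ?a * (5*M)" .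
    moreover have "(2+5*M)*?a = 2*?a + ?a*(5*M)" by (simp only: algebra_simps)
    ultimately show ?thesis using t1 abs_triangle_ineq[of "?a*d1*c2 y" "?a*(d0+d1*y)*Dc"]
      by linarith
  qed
  ultimately show ?thesis unfolding feq by blast
qed

lemma rminus_eq: "rminus chi0 K p (psi chi0 K p A s d0 d1) s y
   = psi chi0 K p A s d0 d1 y - (rmode chi0 K p (psi chi0 K p A s d0 d1) s 0
       + rmode chi0 K p (psi chi0 K p A s d0 d1) s 1 * y
       + rmode chi0 K p (psi chi0 K p A s d0 d1) s 2 * (y^2 - 2))"
  by (simp add: rminus_def rb_psi numeral_2_eq_2 hpoly_def)

end


context setting begin

abbreviation "md A d0 d1 m \<equiv> rmode chi0 K p (psi chi0 K p A s d0 d1) s m"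
abbreviation "aa A \<equiv> A / s powr (2 * beta p + 1)"

lemma psi_bound: assumes "0 \<le> A" "\<bar>d0\<bar> \<le> 2" "\<bar>d1\<bar> \<le> 2"
  shows "\<bar>psi chi0 K p A s d0 d1 y\<bar> \<le> aa A * (2 + 2*\<bar>y\<bar>)"
proof -
  obtain a where a: "aa A = a" by simp
  have a0: "0 \<le> a" using assms a by auto
  have "\<bar>d0 + d1*y\<bar> \<le> 2 + 2*\<bar>y\<bar>"
  proof -
    have "\<bar>d1*y\<bar> \<le> 2*\<bar>y\<bar>" unfolding abs_mult using assms(3) by (intro mult_right_mono) auto
    then show ?thesis using assms(2) abs_triangle_ineq[of d0 "d1*y"] by linarith
  qed
  moreover have c: "\<bar>c2 y\<bar> \<le> 1" by (subst abs_of_nonneg[OF c2_ge0]) (rule c2_le1)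
  ultimately have "\<bar>(d0 + d1*y) * c2 y\<bar> \<le> (2 + 2*\<bar>y\<bar>) * 1"
    unfolding abs_mult by (intro mult_mono) auto
  then have "a * \<bar>(d0 + d1*y) * c2 y\<bar> \<le> a * (2 + 2*\<bar>y\<bar>)"
    using a0 by (intro mult_left_mono) auto
  moreover have "\<bar>psi chi0 K p A s d0 d1 y\<bar> = a * \<bar>(d0 + d1*y) * c2 y\<bar>"
    unfolding psi_eq a by (simp only: mult.assoc abs_mult abs_of_nonneg[OF a0])
  ultimately show ?thesis unfolding a by simp
qed

lemma rminus_bound:
  assumes "0 \<le> A" "\<bar>d0\<bar> \<le> 2" "\<bar>d1\<bar> \<le> 2"
    and m: "\<bar>md A d0 d1 0\<bar> \<le> aa A" "\<bar>md A d0 d1 1\<bar> \<le> aa A" "\<bar>md A d0 d1 2\<bar> \<le> B"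
  shows "\<bar>rminus chi0 K p (psi chi0 K p A s d0 d1) s y\<bar> \<le> (6 * aa A + 3 * B) * (1 + \<bar>y\<bar>^3)"
proof -
  obtain a where a: "aa A = a" by simp
  let ?a = "a" and ?t = "1 + \<bar>y\<bar>^3"
  note cb = cube_bounds[of y]
  have a0: "0 \<le> ?a" using assms a by auto
  have B0: "0 \<le> B" using m(3) by linarith
  have p: "\<bar>psi chi0 K p A s d0 d1 y\<bar> \<le> ?a * (2 + 2*\<bar>y\<bar>)" using psi_bound[OF assms(1-3)] a by simp
  have m1: "\<bar>md A d0 d1 1 * y\<bar> \<le> ?a * \<bar>y\<bar>" unfolding abs_mult using m(2) a by (intro mult_right_mono) auto
  have y2: "\<bar>y^2 - 2\<bar> \<le> y^2 + 2" by (simp add: abs_le_iff)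
  have m2: "\<bar>md A d0 d1 2 * (y^2 - 2)\<bar> \<le> B * (y^2 + 2)"
    unfolding abs_mult using m(3) y2 by (intro mult_mono) auto
  have e1: "?a * (2 + 2*\<bar>y\<bar>) + ?a + ?a * \<bar>y\<bar> \<le> 6 * ?a * ?t"
  proof -
    have "?a * \<bar>y\<bar> \<le> ?a * ?t" using cb(1) a0 by (rule mult_left_mono)
    moreover have "?a * 1 \<le> ?a * ?t" using cb(3) a0 by (rule mult_left_mono)
    ultimately show ?thesis by (simp add: algebra_simps)
  qed
  have e2: "B * (y^2 + 2) \<le> 3 * B * ?t"
  proof -
    have "B * y^2 \<le> B * ?t" using cb(2) B0 by (rule mult_left_mono)
    moreover have "B * 1 \<le> B * ?t" using cb(3) B0 by (rule mult_left_mono)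
    ultimately show ?thesis by (simp add: algebra_simps)
  qed
  have "\<bar>rminus chi0 K p (psi chi0 K p A s d0 d1) s y\<bar>
     \<le> \<bar>psi chi0 K p A s d0 d1 y\<bar> + \<bar>md A d0 d1 0\<bar> + \<bar>md A d0 d1 1 * y\<bar> + \<bar>md A d0 d1 2 * (y^2 - 2)\<bar>"
    unfolding rminus_eq by linarith
  also have "\<dots> \<le> (6 * ?a + 3 * B) * ?t"
    using p m(1) m1 m2 e1 e2 a by (simp add: algebra_simps)
  finally show ?thesis unfolding a .
qed

lemma rminus_deriv:
  assumes M: "\<And>x. 0 \<le> x \<Longrightarrow> x \<le> 2 \<Longrightarrow> \<bar>deriv g x\<bar> \<le> M" "0 \<le> M"
    and "0 \<le> A" "\<bar>d0\<bar> \<le> 2" "\<bar>d1\<bar> \<le> 2"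
    and m: "\<bar>md A d0 d1 1\<bar> \<le> aa A" "\<bar>md A d0 d1 2\<bar> \<le> B"
  shows "\<bar>deriv (psi chi0 K p A s d0 d1) y\<bar> \<le> (2 + 5*M) * aa A"
    "\<bar>deriv (rminus chi0 K p (psi chi0 K p A s d0 d1) s) y\<bar> \<le> ((3 + 5*M) * aa A + 2 * B) * (1 + \<bar>y\<bar>^3)"
proof -
  obtain a where a: "aa A = a" by simp
  let ?a = "a" and ?t = "1 + \<bar>y\<bar>^3"
  note cb = cube_bounds[of y]
  have a0: "0 \<le> ?a" using assms a by auto
  have B0: "0 \<le> B" using m(2) by linarith
  obtain D where D: "(psi chi0 K p A s d0 d1 has_real_derivative D) (at y)" "\<bar>D\<bar> \<le> (2 + 5*M) * ?a"
    using psi_deriv[OF M assms(3-5)] a by auto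
  show "\<bar>deriv (psi chi0 K p A s d0 d1) y\<bar> \<le> (2 + 5*M) * aa A"
    using D DERIV_imp_deriv a by metis
  have req: "rminus chi0 K p (psi chi0 K p A s d0 d1) s
     = (\<lambda>y. psi chi0 K p A s d0 d1 y - (md A d0 d1 0 + md A d0 d1 1 * y + md A d0 d1 2 * (y^2 - 2)))"
    by (rule ext) (rule rminus_eq)
  have "(rminus chi0 K p (psi chi0 K p A s d0 d1) s has_real_derivative
          D - (md A d0 d1 1 + md A d0 d1 2 * (2*y))) (at y)"
    unfolding req using D(1) by (auto intro!: derivative_eq_intros)
  then have de: "deriv (rminus chi0 K p (psi chi0 K p A s d0 d1) s) y = D - (md A d0 d1 1 + md A d0 d1 2 * (2*y))"
    by (rule DERIV_imp_deriv)
  have m2: "\<bar>md A d0 d1 2 * (2*y)\<bar> \<le> B * (2*\<bar>y\<bar>)"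
    unfolding abs_mult using m(2) by (intro mult_mono) auto
  have e1: "(2 + 5*M) * ?a + ?a \<le> (3 + 5*M) * ?a * ?t"
  proof -
    have "0 \<le> (3 + 5*M) * ?a" using a0 M(2) by (intro mult_nonneg_nonneg) auto
    then have "(3 + 5*M) * ?a * 1 \<le> (3 + 5*M) * ?a * ?t" using cb(3) by (intro mult_left_mono) auto
    then show ?thesis by (simp add: algebra_simps)
  qed
  have e2: "B * (2*\<bar>y\<bar>) \<le> 2 * B * ?t"
    using cb(1) B0 by (simp add: mult_left_mono)
  have "\<bar>deriv (rminus chi0 K p (psi chi0 K p A s d0 d1) s) y\<bar>
      \<le> \<bar>D\<bar> + \<bar>md A d0 d1 1\<bar> + \<bar>md A d0 d1 2 * (2*y)\<bar>"
    unfolding de by linarith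
  also have "\<dots> \<le> ((3 + 5*M) * ?a + 2 * B) * ?t"
    using D(2) m(1) m2 e1 e2 a by (simp add: algebra_simps)
  finally show "\<bar>deriv (rminus chi0 K p (psi chi0 K p A s d0 d1) s) y\<bar> \<le> ((3 + 5*M) * aa A + 2 * B) * ?t" unfolding a .
qed

end


lemma box_pair_iff: "((x::real), (y::real)) \<in> box (a, c) (b, d) \<longleftrightarrow> a < x \<and> x < b \<and> c < y \<and> y < d"
  by (auto simp: mem_box Basis_prod_def)

lemma scale_le: "0 < (a::real) \<Longrightarrow> (a * t \<le> a) = (t \<le> 1)" "0 < (a::real) \<Longrightarrow> (-a \<le> a * t) = (-1 \<le> t)"
  "0 < (a::real) \<Longrightarrow> (a * t < a) = (t < 1)" "0 < (a::real) \<Longrightarrow> (-a < a * t) = (-1 < t)"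
  using mult_le_cancel_left_pos[of a t 1] mult_le_cancel_left_pos[of a "-1" t]
    mult_less_cancel_left_pos[of a t 1] mult_less_cancel_left_pos[of a "-1" t] by auto

lemma scale_cc: assumes "0 < (a::real)" "0 < u"
  shows "a*x*u \<in> {-a..a} \<longleftrightarrow> x \<in> {-1/u..1/u}" "a*x*u \<in> {-a<..<a} \<longleftrightarrow> x \<in> {-1/u<..<1/u}"
proof -
  have e: "a*x*u = a*(x*u)" by simp
  have "x*u \<le> 1 \<longleftrightarrow> x \<le> 1/u" "-1 \<le> x*u \<longleftrightarrow> -1/u \<le> x"
    "x*u < 1 \<longleftrightarrow> x < 1/u" "-1 < x*u \<longleftrightarrow> -1/u < x"
    using assms(2) by (auto simp: field_simps)
  then show "a*x*u \<in> {-a..a} \<longleftrightarrow> x \<in> {-1/u..1/u}" "a*x*u \<in> {-a<..<a} \<longleftrightarrow> x \<in> {-1/u<..<1/u}"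
    unfolding e using scale_le[OF assms(1), of "x*u"] by auto
qed

lemma rect_props:
  fixes a u w :: real
  assumes a: "0 < a" and u: "0 < u" and w: "0 < w"
  defines "Phi \<equiv> (\<lambda>(d0::real, d1::real). (a * d0 * u, a * d1 * w))"
  shows "inj_on Phi (cbox (-1/u, -1/w) (1/u, 1/w))"
    "Phi ` cbox (-1/u, -1/w) (1/u, 1/w) = cbox (-a, -a) (a, a)"
    "Phi ` frontier (cbox (-1/u, -1/w) (1/u, 1/w)) \<subseteq> frontier (cbox (-a, -a) (a, a))"
    "boundary_degree Phi (-1/u) (-1/w) (1/u) (1/w) = 1"
proof -
  show "inj_on Phi (cbox (-1/u, -1/w) (1/u, 1/w))"
    unfolding Phi_def using a u w by (auto simp: inj_on_def)
  have cb: "\<And>x. a*x*u \<in> {-a..a} \<longleftrightarrow> x \<in> {-1/u..1/u}" "\<And>y. a*y* w \<in> {-a..a} \<longleftrightarrow> y \<in> {-1/w..1/w}"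
    using scale_cc[OF a u] scale_cc[OF a w] by auto
  have bb: "\<And>x. a*x*u \<in> {-a<..<a} \<longleftrightarrow> x \<in> {-1/u<..<1/u}" "\<And>y. a*y* w \<in> {-a<..<a} \<longleftrightarrow> y \<in> {-1/w<..<1/w}"
    using scale_cc[OF a u] scale_cc[OF a w] by auto
  show "Phi ` cbox (-1/u, -1/w) (1/u, 1/w) = cbox (-a, -a) (a, a)"
  proof
    show "Phi ` cbox (-1/u, -1/w) (1/u, 1/w) \<subseteq> cbox (-a, -a) (a, a)"
      using cb unfolding Phi_def by auto
  next
    show "cbox (-a, -a) (a, a) \<subseteq> Phi ` cbox (-1/u, -1/w) (1/u, 1/w)"
    proof
      fix z assume z: "z \<in> cbox (-a, -a) (a, a)"
      obtain x y where zxy: "z = (x, y)" by (cases z)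
      have "z = Phi (x/(a*u), y/(a* w))" using zxy a u w unfolding Phi_def by simp
      moreover have "(x/(a*u), y/(a* w)) \<in> cbox (-1/u, -1/w) (1/u, 1/w)"
        using z zxy cb[of "x/(a*u)"] cb(2)[of "y/(a* w)"] a u w by (auto simp: field_simps)
      ultimately show "z \<in> Phi ` cbox (-1/u, -1/w) (1/u, 1/w)" by blast
    qed
  qed
  show "Phi ` frontier (cbox (-1/u, -1/w) (1/u, 1/w)) \<subseteq> frontier (cbox (-a, -a) (a, a))"
    unfolding frontier_cbox
  proof
    fix z assume "z \<in> Phi ` (cbox (-1/u, -1/w) (1/u, 1/w) - box (-1/u, -1/w) (1/u, 1/w))"
    then obtain x y where z: "z = Phi (x, y)" "(x,y) \<in> cbox (-1/u, -1/w) (1/u, 1/w)"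
       "(x,y) \<notin> box (-1/u, -1/w) (1/u, 1/w)" by auto
    have P: "Phi (x, y) = (a*x*u, a*y*w)" unfolding Phi_def by simp
    have h1: "(-a \<le> a*x*u \<and> a*x*u \<le> a) = (-1/u \<le> x \<and> x \<le> 1/u)" using cb(1)[of x] by simp
    have h2: "(-a \<le> a*y*w \<and> a*y*w \<le> a) = (-1/w \<le> y \<and> y \<le> 1/w)" using cb(2)[of y] by simp
    have h3: "(-a < a*x*u \<and> a*x*u < a) = (-1/u < x \<and> x < 1/u)" using bb(1)[of x] by simp
    have h4: "(-a < a*y*w \<and> a*y*w < a) = (-1/w < y \<and> y < 1/w)" using bb(2)[of y] by simp
    have "(a*x*u, a*y*w) \<in> cbox (-a, -a) (a, a) - box (-a, -a) (a, a)"
      using z(2,3) unfolding box_pair_iff cbox_Pair_iff mem_box_real Diff_iff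
      using h1 h2 h3 h4 by blast
    then show "z \<in> cbox (-a, -a) (a, a) - box (-a, -a) (a, a)" using z(1) P by simp
  qed
  define L where "L = (\<lambda>z. Complex (fst (Phi (Re z, Im z))) (snd (Phi (Re z, Im z))))"
  have Llin: "\<And>p q t. L (linepath p q t) = linepath (L p) (L q) t"
    unfolding L_def Phi_def linepath_def by (simp add: complex_eq_iff algebra_simps)
  have Ljoin: "\<And>g h. L \<circ> (g +++ h) = (L \<circ> g) +++ (L \<circ> h)"
    by (rule ext) (simp add: joinpaths_def)
  have Lline: "\<And>p q. L \<circ> linepath p q = linepath (L p) (L q)"
    by (rule ext) (simp add: Llin)
  have "L \<circ> rectpath (Complex (-1/u) (-1/w)) (Complex (1/u) (1/w))
      = rectpath (Complex (-a) (-a)) (Complex a a)"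
    unfolding rectpath_def Let_def Ljoin Lline
    using a u w by (simp add: L_def Phi_def)
  moreover have "0 \<in> box (Complex (-a) (-a)) (Complex a a)"
    using a by (simp add: in_box_complex_iff)
  ultimately show "boundary_degree Phi (-1/u) (-1/w) (1/u) (1/w) = 1"
    unfolding boundary_degree_def L_def[symmetric] using winding_number_rectpath by simp
qed


context setting begin

lemma psi_sup: assumes "0 \<le> A" "\<bar>d0\<bar> \<le> 2" "\<bar>d1\<bar> \<le> 2"
  shows "\<bar>psi chi0 K p A s d0 d1 y\<bar> \<le> aa A * (2 + 2*ks)"
proof (cases "ks < \<bar>y\<bar>")
  case True
  have "0 \<le> aa A * (2 + 2*ks)" using assms ks_pos by simp
  then show ?thesis using True c2_zero by (simp add: psi_eq)
next
  case False
  have "aa A * (2 + 2*\<bar>y\<bar>) \<le> aa A * (2 + 2*ks)"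
    using False assms by (intro mult_left_mono) auto
  then show ?thesis using psi_bound[OF assms, of y] by linarith
qed

lemma psi_meas: "psi chi0 K p A s d0 d1 \<in> borel_measurable lborel"
proof -
  have "psi chi0 K p A s d0 d1 = (\<lambda>y. aa A * (d0 + d1*y) * c2 y)"
    by (rule ext) (simp add: psi_eq)
  also have "\<dots> \<in> borel_measurable lborel" by measurable
  finally show ?thesis .
qed

lemma fixed_s:
  assumes A: "1 \<le> A" and M: "\<And>x. 0 \<le> x \<Longrightarrow> x \<le> 2 \<Longrightarrow> \<bar>deriv g x\<bar> \<le> M" "0 \<le> M"
    and s1: "1 < s"
    and H1: "(9 + 5*M + 10*(1/\<bar>N2\<bar>)) * (A / s powr (2 * beta p + 1)) < 1 / s powr gam"
    and H2: "2 * (1/\<bar>N2\<bar>) * (A / s powr (2 * beta p + 1)) < 1 / s powr (4 * beta p - 1)"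
    and H3: "(3 + 5*M) * (A / s powr (2 * beta p + 1)) \<le> 1 / s powr (gam - 3 * beta p)"
  shows "(let Phi = (\<lambda>(d0, d1). (rmode chi0 K p (psi chi0 K p A s d0 d1) s 0,
                             rmode chi0 K p (psi chi0 K p A s d0 d1) s 1));
         a = A / s powr (2 * beta p + 1);
         Q = cbox (- a, - a) (a, a)
     in \<exists>a0 a1 b0 b1. a0 < b0 \<and> a1 < b1 \<and>
          cbox (a0, a1) (b0, b1) \<subseteq> cbox (-2, -2) (2, 2) \<and>
          inj_on Phi (cbox (a0, a1) (b0, b1)) \<and>
          Phi ` cbox (a0, a1) (b0, b1) = Q \<and>
          Phi ` frontier (cbox (a0, a1) (b0, b1)) \<subseteq> frontier Q \<and>
          boundary_degree Phi a0 a1 b0 b1 = 1 \<and>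
          (\<forall>d0 d1. (d0, d1) \<in> cbox (a0, a1) (b0, b1) \<longrightarrow>
             (let f = psi chi0 K p A s d0 d1 in
               (\<forall>y. re chi0 K p f s y = 0) \<and>
               (\<forall>y. \<bar>rminus chi0 K p f s y\<bar> < (1 + \<bar>y\<bar>^3) / s powr gam) \<and>
               \<bar>rmode chi0 K p f s 0\<bar> \<le> a \<and>
               \<bar>rmode chi0 K p f s 1\<bar> \<le> a \<and>
               \<bar>rmode chi0 K p f s 2\<bar> < 1 / s powr (4 * beta p - 1) \<and>
               f \<in> vartheta chi0 K p gam A s \<and>
               (\<forall>y. \<bar>deriv f y\<bar> \<le> (3 + 5*M) * a) \<and>
               (3 + 5*M) * a \<le> 1 / s powr (gam - 3 * beta p) \<and>
               (\<forall>y. \<bar>deriv (rminus chi0 K p f s) y\<bar> \<le> (1 + \<bar>y\<bar>^3) / s powr gam))))"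
proof -
  obtain a where a: "A / s powr (2 * beta p + 1) = a" by simp
  obtain Q where Q: "1/\<bar>N2\<bar> = Q" by simp
  have apos: "0 < a" using a A s1 by auto
  have Q0: "0 \<le> Q" using Q by auto
  have A0: "0 \<le> A" using A by simp
  note J0 = J0_bounds and J2 = J2_bounds
  define u where "u = J 0"
  define w where "w = J 2 / 2"
  have u: "0 < u" "1/u \<le> 2" using J0 unfolding u_def by (auto simp: field_simps)
  have w: "0 < w" "1/w \<le> 2" using J2 unfolding w_def by (auto simp: field_simps)
  have Phi_eq: "(\<lambda>(d0, d1). (rmode chi0 K p (psi chi0 K p A s d0 d1) s 0,
                             rmode chi0 K p (psi chi0 K p A s d0 d1) s 1))
       = (\<lambda>(d0::real, d1::real). (a * d0 * u, a * d1 * w))"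
  proof (rule ext)
    fix x :: "real \<times> real"
    obtain d0 d1 where x: "x = (d0, d1)" by (cases x)
    have "(rmode chi0 K p (psi chi0 K p A s d0 d1) s 0, rmode chi0 K p (psi chi0 K p A s d0 d1) s 1)
        = (a * d0 * u, a * d1 * w)"
      using mode0[of A d0 d1] mode1[of A d0 d1] a by (simp add: u_def w_def)
    then show "(\<lambda>(d0, d1). (rmode chi0 K p (psi chi0 K p A s d0 d1) s 0,
                             rmode chi0 K p (psi chi0 K p A s d0 d1) s 1)) x
       = (\<lambda>(d0::real, d1::real). (a * d0 * u, a * d1 * w)) x" using x by simp
  qed
  note R = rect_props[OF apos u(1) w(1)]
  have box2: "cbox (-1/u, -1/w) (1/u, 1/w) \<subseteq> cbox (-2, -2) (2, 2)"
    using u w by auto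
  have pt: "let f = psi chi0 K p A s d0 d1 in
               (\<forall>y. re chi0 K p f s y = 0) \<and>
               (\<forall>y. \<bar>rminus chi0 K p f s y\<bar> < (1 + \<bar>y\<bar>^3) / s powr gam) \<and>
               \<bar>rmode chi0 K p f s 0\<bar> \<le> a \<and>
               \<bar>rmode chi0 K p f s 1\<bar> \<le> a \<and>
               \<bar>rmode chi0 K p f s 2\<bar> < 1 / s powr (4 * beta p - 1) \<and>
               f \<in> vartheta chi0 K p gam A s \<and>
               (\<forall>y. \<bar>deriv f y\<bar> \<le> (3 + 5*M) * a) \<and>
               (3 + 5*M) * a \<le> 1 / s powr (gam - 3 * beta p) \<and>
               (\<forall>y. \<bar>deriv (rminus chi0 K p f s) y\<bar> \<le> (1 + \<bar>y\<bar>^3) / s powr gam)"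
    if d: "(d0, d1) \<in> cbox (-1/u, -1/w) (1/u, 1/w)" for d0 d1
  proof -
    have d0: "\<bar>d0\<bar> \<le> 1/u" and d1: "\<bar>d1\<bar> \<le> 1/w" using d by auto
    have d02: "\<bar>d0\<bar> \<le> 2" and d12: "\<bar>d1\<bar> \<le> 2" using d0 d1 u w by linarith+
    have m0: "\<bar>md A d0 d1 0\<bar> \<le> a"
    proof -
      have "\<bar>md A d0 d1 0\<bar> = a * (\<bar>d0\<bar> * u)" using apos u by (simp add: mode0 a u_def abs_mult)
      also have "\<bar>d0\<bar> * u \<le> 1/u * u" using d0 u by (intro mult_right_mono) auto
      then have "a * (\<bar>d0\<bar> * u) \<le> a * 1" using u apos by (intro mult_left_mono) auto
      finally show ?thesis by simp
    qed
    have m1: "\<bar>md A d0 d1 1\<bar> \<le> a"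
    proof -
      have e: "md A d0 d1 1 = a * d1 * w" using mode1[of A d0 d1] a unfolding w_def by simp
      have "\<bar>md A d0 d1 1\<bar> = a * (\<bar>d1\<bar> * w)" unfolding e using apos w by (simp add: abs_mult)
      also have "\<bar>d1\<bar> * w \<le> 1/w * w" using d1 w by (intro mult_right_mono) auto
      then have "a * (\<bar>d1\<bar> * w) \<le> a * 1" using w apos by (intro mult_left_mono) auto
      finally show ?thesis by simp
    qed
    have m2: "\<bar>md A d0 d1 2\<bar> \<le> 2 * a * Q"
    proof -
      have "\<bar>J 2 - 2 * J 0\<bar> \<le> 1" using J0 J2 by auto
      then have "\<bar>(J 2 - 2 * J 0) / N2\<bar> \<le> 1 / \<bar>N2\<bar>"
        unfolding abs_divide by (intro divide_right_mono) auto
      then have q: "\<bar>(J 2 - 2 * J 0) / N2\<bar> \<le> Q" using Q by simp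
      have "\<bar>md A d0 d1 2\<bar> = a * \<bar>d0\<bar> * \<bar>(J 2 - 2 * J 0) / N2\<bar>"
        using apos by (simp add: mode2 a abs_mult)
      also have "\<dots> \<le> a * 2 * Q" using apos d02 q Q0 by (intro mult_mono) auto
      finally show ?thesis by simp
    qed
    have aa: "aa A = a" by (rule a)
    have H1': "(9 + 5*M + 10*Q) * a < 1 / s powr gam" using H1 a Q by simp
    have H2': "2 * Q * a < 1 / s powr (4 * beta p - 1)" using H2 a Q by simp
    have H3': "(3 + 5*M) * a \<le> 1 / s powr (gam - 3 * beta p)" using H3 a by simp
    have rb: "\<bar>rminus chi0 K p (psi chi0 K p A s d0 d1) s y\<bar> < (1 + \<bar>y\<bar>^3) / s powr gam" for y
    proof -
      have "\<bar>rminus chi0 K p (psi chi0 K p A s d0 d1) s y\<bar> \<le> (6 * a + 3 * (2*a*Q)) * (1 + \<bar>y\<bar>^3)"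
        using rminus_bound[OF A0 d02 d12, of "2*a*Q" y] m0 m1 m2 aa by simp
      also have "\<dots> < (1 / s powr gam) * (1 + \<bar>y\<bar>^3)"
      proof (rule mult_strict_right_mono)
        show "6 * a + 3 * (2*a*Q) < 1 / s powr gam"
        proof -
          have "0 \<le> (3 + 5*M + 4*Q) * a" using apos Q0 M(2) by (intro mult_nonneg_nonneg) auto
          moreover have "(9 + 5*M + 10*Q) * a = 6 * a + 3 * (2*a*Q) + (3 + 5*M + 4*Q) * a"
            by (simp add: algebra_simps)
          ultimately show ?thesis using H1' by linarith
        qed
        show "0 < 1 + \<bar>y\<bar>^3" by (simp add: add_pos_nonneg)
      qed
      finally show ?thesis by simp
    qed
    have db: "\<bar>deriv (psi chi0 K p A s d0 d1) y\<bar> \<le> (3 + 5*M) * a"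
      "\<bar>deriv (rminus chi0 K p (psi chi0 K p A s d0 d1) s) y\<bar> \<le> (1 + \<bar>y\<bar>^3) / s powr gam" for y
    proof -
      note D = rminus_deriv[OF M A0 d02 d12, of "2*a*Q" y]
      have "\<bar>deriv (psi chi0 K p A s d0 d1) y\<bar> \<le> (2 + 5*M) * a" using D(1) m1 m2 aa by simp
      then show "\<bar>deriv (psi chi0 K p A s d0 d1) y\<bar> \<le> (3 + 5*M) * a" using apos by (simp add: algebra_simps)
      have "\<bar>deriv (rminus chi0 K p (psi chi0 K p A s d0 d1) s) y\<bar> \<le> ((3 + 5*M) * a + 2 * (2*a*Q)) * (1 + \<bar>y\<bar>^3)"
        using D(2) m1 m2 aa by simp
      also have "\<dots> \<le> (1 / s powr gam) * (1 + \<bar>y\<bar>^3)"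
      proof (rule mult_right_mono)
        show "(3 + 5*M) * a + 2 * (2*a*Q) \<le> 1 / s powr gam"
        proof -
          have "0 \<le> (6 + 6*Q) * a" using apos Q0 M(2) by (intro mult_nonneg_nonneg) auto
          moreover have "(9 + 5*M + 10*Q) * a = (3 + 5*M) * a + 2 * (2*a*Q) + (6 + 6*Q) * a"
            by (simp add: algebra_simps)
          ultimately show ?thesis using H1' by linarith
        qed
      qed (simp add: add_nonneg_nonneg)
      finally show "\<bar>deriv (rminus chi0 K p (psi chi0 K p A s d0 d1) s) y\<bar> \<le> (1 + \<bar>y\<bar>^3) / s powr gam" by simp
    qed
    have "2*a*Q = 2*Q*a" by (simp only: mult_ac)
    then have m2': "\<bar>md A d0 d1 2\<bar> < 1 / s powr (4 * beta p - 1)" using m2 H2' by linarith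
    have vt: "psi chi0 K p A s d0 d1 \<in> vartheta chi0 K p gam A s"
      unfolding vartheta_def mem_Collect_eq
    proof (intro conjI)
      show "Linfty (psi chi0 K p A s d0 d1)"
        unfolding Linfty_def using psi_meas psi_sup[OF A0 d02 d12] by blast
      show "AE y in lborel. \<bar>re chi0 K p (psi chi0 K p A s d0 d1) s y\<bar> \<le> A^2 * s powr (- (gam - 3 * beta p))"
        by (simp add: re_psi)
      show "AE y in lborel. \<bar>rminus chi0 K p (psi chi0 K p A s d0 d1) s y\<bar> / (1 + \<bar>y\<bar>^3) \<le> A * s powr (- gam)"
      proof (intro AE_I2)
        fix y :: real
        have t: "0 < 1 + \<bar>y\<bar>^3" by (simp add: add_pos_nonneg)
        have "\<bar>rminus chi0 K p (psi chi0 K p A s d0 d1) s y\<bar> / (1 + \<bar>y\<bar>^3) \<le> 1 / s powr gam"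
        proof -
          have "\<bar>rminus chi0 K p (psi chi0 K p A s d0 d1) s y\<bar> / (1 + \<bar>y\<bar>^3)
              < ((1 + \<bar>y\<bar>^3) / s powr gam) / (1 + \<bar>y\<bar>^3)"
            by (rule divide_strict_right_mono[OF rb t])
          also have "\<dots> = 1 / s powr gam" using t by simp
          finally show ?thesis by simp
        qed
        also have "\<dots> \<le> A / s powr gam" using A s1 by (intro divide_right_mono) auto
        also have "\<dots> = A * s powr (- gam)" by (simp add: powr_minus_divide)
        finally show "\<bar>rminus chi0 K p (psi chi0 K p A s d0 d1) s y\<bar> / (1 + \<bar>y\<bar>^3) \<le> A * s powr (- gam)" .
      qed
      have pm: "A * s powr (- (2 * beta p + 1)) = a" unfolding powr_minus_divide using a by simp
      show "\<bar>md A d0 d1 0\<bar> \<le> A * s powr (- (2 * beta p + 1))"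
        by (subst pm) (rule m0)
      show "\<bar>md A d0 d1 1\<bar> \<le> A * s powr (- (2 * beta p + 1))"
        by (subst pm) (rule m1)
      have "1 * (1 / s powr (4 * beta p - 1)) \<le> sqrt A * (1 / s powr (4 * beta p - 1))"
        using A by (intro mult_right_mono) auto
      then have "1 / s powr (4 * beta p - 1) \<le> sqrt A * s powr (- (4 * beta p - 1))"
        unfolding powr_minus_divide by simp
      then show "\<bar>md A d0 d1 2\<bar> \<le> sqrt A * s powr (- (4 * beta p - 1))" using m2' by simp
    qed
    show ?thesis unfolding Let_def using re_psi rb m0 m1 m2' vt db H3' by blast
  qed
  show ?thesis
    unfolding Let_def a Phi_eq
    apply (rule exI[of _ "-1/u"], rule exI[of _ "-1/w"], rule exI[of _ "1/u"], rule exI[of _ "1/w"])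
    using R box2 pt u(1) w(1) by (simp add: Let_def)
qed

end


lemma conv_pow:
  fixes s W A c d :: real
  assumes "0 < s" "W * A * s powr (c - d) < 1"
  shows "W * (A / s powr d) < 1 / s powr c"
proof -
  have "W * A * (s powr c / s powr d) < 1" using assms by (simp add: powr_diff)
  then have "W * A * (s powr c / s powr d) * (1 / s powr c) < 1 * (1 / s powr c)"
    using assms(1) by (intro mult_strict_right_mono) auto
  then show ?thesis using assms(1) by simp
qed

theorem proposition4p4:
  fixes p mu K gam :: real and chi0 :: "real \<Rightarrow> real"
  assumes "p > 3" and "mu > 0" and "K \<ge> 6"
    and "admissible_chi0 chi0"
    and "3 * beta p < gam" and "gam < min (5 * beta p - 1) (2 * beta p + 1)"
  shows "\<exists>C>0. \<forall>A\<ge>1. \<exists>s03>1. \<forall>s0\<ge>s03.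
    (let Phi = (\<lambda>(d0, d1). (rmode chi0 K p (psi chi0 K p A s0 d0 d1) s0 0,
                             rmode chi0 K p (psi chi0 K p A s0 d0 d1) s0 1));
         a = A / s0 powr (2 * beta p + 1);
         Q = cbox (- a, - a) (a, a)
     in \<exists>a0 a1 b0 b1. a0 < b0 \<and> a1 < b1 \<and>
          cbox (a0, a1) (b0, b1) \<subseteq> cbox (-2, -2) (2, 2) \<and>
       \<comment> \<open>(i)\<close>
          inj_on Phi (cbox (a0, a1) (b0, b1)) \<and>
          Phi ` cbox (a0, a1) (b0, b1) = Q \<and>
          Phi ` frontier (cbox (a0, a1) (b0, b1)) \<subseteq> frontier Q \<and>
          boundary_degree Phi a0 a1 b0 b1 = 1 \<and>
       \<comment> \<open>(ii) and (iii)\<close>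
          (\<forall>d0 d1. (d0, d1) \<in> cbox (a0, a1) (b0, b1) \<longrightarrow>
             (let f = psi chi0 K p A s0 d0 d1 in
               (\<forall>y. re chi0 K p f s0 y = 0) \<and>
               (\<forall>y. \<bar>rminus chi0 K p f s0 y\<bar> < (1 + \<bar>y\<bar>^3) / s0 powr gam) \<and>
               \<bar>rmode chi0 K p f s0 0\<bar> \<le> a \<and>
               \<bar>rmode chi0 K p f s0 1\<bar> \<le> a \<and>
               \<bar>rmode chi0 K p f s0 2\<bar> < 1 / s0 powr (4 * beta p - 1) \<and>
               f \<in> vartheta chi0 K p gam A s0 \<and>
               (\<forall>y. \<bar>deriv f y\<bar> \<le> C * a) \<and>
               C * a \<le> 1 / s0 powr (gam - 3 * beta p) \<and>
               (\<forall>y. \<bar>deriv (rminus chi0 K p f s0) y\<bar> \<le> (1 + \<bar>y\<bar>^3) / s0 powr gam))))"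
proof -
  obtain g where gs: "\<And>n x. ((deriv ^^ n) g) differentiable (at x)"
    and geq: "\<And>x. 0 \<le> x \<Longrightarrow> g x = chi0 x"
    using assms(4) unfolding admissible_chi0_def smooth_on_nonneg_def by metis
  have gd: "\<And>x. g differentiable (at x)" using gs[of 0] by simp
  have gd1: "\<And>x. deriv g differentiable (at x)" using gs[of 1] by simp
  have "continuous_on {0..2} (deriv g)"
    using gd1 by (simp add: continuous_at_imp_continuous_on differentiable_imp_continuous_within)
  then have "bounded (deriv g ` {0..2})" by (intro compact_imp_bounded compact_continuous_image) auto
  then obtain M where Mpos: "0 < M" and Mb0: "\<And>x. x \<in> {0..2} \<Longrightarrow> norm (deriv g x) \<le> M"
    unfolding bounded_pos by auto
  have Mb: "\<And>x. 0 \<le> x \<Longrightarrow> x \<le> 2 \<Longrightarrow> \<bar>deriv g x\<bar> \<le> M" using Mb0 by auto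
  have bpos: "0 < beta p" using assms(1) by (simp add: beta_def)
  have blt1: "beta p < 1" using assms(1) by (simp add: beta_def field_simps)
  show ?thesis
  proof (rule exI[of _ "3 + 5*M"], intro conjI allI impI)
    show "0 < 3 + 5*M" using Mpos by simp
    fix A :: real assume A: "1 \<le> A"
    define W where "W = 9 + 5*M + 10*(1/\<bar>N2\<bar>)"
    have ev: "eventually (\<lambda>s. 2 \<le> s \<and> 8 * s powr (- beta p) < 1
        \<and> W * A * s powr (gam - (2 * beta p + 1)) < 1
        \<and> 2 * (1/\<bar>N2\<bar>) * A * s powr ((4 * beta p - 1) - (2 * beta p + 1)) < 1
        \<and> (3 + 5*M) * A * s powr ((gam - 3 * beta p) - (2 * beta p + 1)) < 1) at_top"
      using assms(5,6) bpos blt1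
      by (intro eventually_conj eventually_ge_at_top eventually_small) auto
    then obtain N where N: "\<And>s. N \<le> s \<Longrightarrow> 2 \<le> s \<and> 8 * s powr (- beta p) < 1
        \<and> W * A * s powr (gam - (2 * beta p + 1)) < 1
        \<and> 2 * (1/\<bar>N2\<bar>) * A * s powr ((4 * beta p - 1) - (2 * beta p + 1)) < 1
        \<and> (3 + 5*M) * A * s powr ((gam - 3 * beta p) - (2 * beta p + 1)) < 1"
      unfolding eventually_at_top_linorder by blast
    show "\<exists>s03>1. \<forall>s0\<ge>s03.
    (let Phi = (\<lambda>(d0, d1). (rmode chi0 K p (psi chi0 K p A s0 d0 d1) s0 0,
                             rmode chi0 K p (psi chi0 K p A s0 d0 d1) s0 1));
         a = A / s0 powr (2 * beta p + 1);
         Q = cbox (- a, - a) (a, a)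
     in \<exists>a0 a1 b0 b1. a0 < b0 \<and> a1 < b1 \<and>
          cbox (a0, a1) (b0, b1) \<subseteq> cbox (-2, -2) (2, 2) \<and>
       \<comment> \<open>(i)\<close>
          inj_on Phi (cbox (a0, a1) (b0, b1)) \<and>
          Phi ` cbox (a0, a1) (b0, b1) = Q \<and>
          Phi ` frontier (cbox (a0, a1) (b0, b1)) \<subseteq> frontier Q \<and>
          boundary_degree Phi a0 a1 b0 b1 = 1 \<and>
       \<comment> \<open>(ii) and (iii)\<close>
          (\<forall>d0 d1. (d0, d1) \<in> cbox (a0, a1) (b0, b1) \<longrightarrow>
             (let f = psi chi0 K p A s0 d0 d1 in
               (\<forall>y. re chi0 K p f s0 y = 0) \<and>
               (\<forall>y. \<bar>rminus chi0 K p f s0 y\<bar> < (1 + \<bar>y\<bar>^3) / s0 powr gam) \<and>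
               \<bar>rmode chi0 K p f s0 0\<bar> \<le> a \<and>
               \<bar>rmode chi0 K p f s0 1\<bar> \<le> a \<and>
               \<bar>rmode chi0 K p f s0 2\<bar> < 1 / s0 powr (4 * beta p - 1) \<and>
               f \<in> vartheta chi0 K p gam A s0 \<and>
               (\<forall>y. \<bar>deriv f y\<bar> \<le> (3 + 5*M) * a) \<and>
               (3 + 5*M) * a \<le> 1 / s0 powr (gam - 3 * beta p) \<and>
               (\<forall>y. \<bar>deriv (rminus chi0 K p f s0) y\<bar> \<le> (1 + \<bar>y\<bar>^3) / s0 powr gam))))"
    proof (rule exI[of _ "max N 2"], intro conjI allI impI)
      show "1 < max N 2" by simp
      fix s0 assume s0: "max N 2 \<le> s0"
      note Ns = N[of s0]
      have s1: "1 < s0" using s0 by simp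
      have c: "2 \<le> s0" "8 * s0 powr (- beta p) < 1"
        "W * A * s0 powr (gam - (2 * beta p + 1)) < 1"
        "2 * (1/\<bar>N2\<bar>) * A * s0 powr ((4 * beta p - 1) - (2 * beta p + 1)) < 1"
        "(3 + 5*M) * A * s0 powr ((gam - 3 * beta p) - (2 * beta p + 1)) < 1"
        using Ns s0 by auto
      have "8 < s0 powr beta p" using c(2) s1 by (simp add: powr_minus_divide field_simps)
      then have ks8: "8 \<le> K * s0 powr beta p"
      proof -
        have "1 * s0 powr beta p \<le> K * s0 powr beta p" using assms(3) by (intro mult_right_mono) auto
        then show ?thesis using \<open>8 < s0 powr beta p\<close> by linarith
      qed
      interpret S: setting chi0 g K p s0
        using assms(4) gd geq ks8 by unfold_locales auto
      have H1: "(9 + 5*M + 10*(1/\<bar>N2\<bar>)) * (A / s0 powr (2 * beta p + 1)) < 1 / s0 powr gam"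
        using conv_pow[OF _ c(3)] s1 unfolding W_def by simp
      have H2: "2 * (1/\<bar>N2\<bar>) * (A / s0 powr (2 * beta p + 1)) < 1 / s0 powr (4 * beta p - 1)"
        using conv_pow[OF _ c(4)] s1 by simp
      have H3: "(3 + 5*M) * (A / s0 powr (2 * beta p + 1)) \<le> 1 / s0 powr (gam - 3 * beta p)"
        using conv_pow[OF _ c(5)] s1 by simp
      show "let Phi = (\<lambda>(d0, d1). (rmode chi0 K p (psi chi0 K p A s0 d0 d1) s0 0,
                             rmode chi0 K p (psi chi0 K p A s0 d0 d1) s0 1));
         a = A / s0 powr (2 * beta p + 1);
         Q = cbox (- a, - a) (a, a)
     in \<exists>a0 a1 b0 b1. a0 < b0 \<and> a1 < b1 \<and>
          cbox (a0, a1) (b0, b1) \<subseteq> cbox (-2, -2) (2, 2) \<and>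
          inj_on Phi (cbox (a0, a1) (b0, b1)) \<and>
          Phi ` cbox (a0, a1) (b0, b1) = Q \<and>
          Phi ` frontier (cbox (a0, a1) (b0, b1)) \<subseteq> frontier Q \<and>
          boundary_degree Phi a0 a1 b0 b1 = 1 \<and>
          (\<forall>d0 d1. (d0, d1) \<in> cbox (a0, a1) (b0, b1) \<longrightarrow>
             (let f = psi chi0 K p A s0 d0 d1 in
               (\<forall>y. re chi0 K p f s0 y = 0) \<and>
               (\<forall>y. \<bar>rminus chi0 K p f s0 y\<bar> < (1 + \<bar>y\<bar>^3) / s0 powr gam) \<and>
               \<bar>rmode chi0 K p f s0 0\<bar> \<le> a \<and>
               \<bar>rmode chi0 K p f s0 1\<bar> \<le> a \<and>
               \<bar>rmode chi0 K p f s0 2\<bar> < 1 / s0 powr (4 * beta p - 1) \<and>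
               f \<in> vartheta chi0 K p gam A s0 \<and>
               (\<forall>y. \<bar>deriv f y\<bar> \<le> (3 + 5*M) * a) \<and>
               (3 + 5*M) * a \<le> 1 / s0 powr (gam - 3 * beta p) \<and>
               (\<forall>y. \<bar>deriv (rminus chi0 K p f s0) y\<bar> \<le> (1 + \<bar>y\<bar>^3) / s0 powr gam)))"
        using S.fixed_s[OF A Mb less_imp_le[OF Mpos] s1 H1 H2 H3] .
    qed
  qed
qed


end
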